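(* Let $X=[0,1]$ with the usual metric, $U=\{0,1,2\}$, and let $F_0,F_1,F_2:[0,1]\to[0,1]$ be given by $F_0(x)=x$ for $0\le x<\frac38$, $F_0(x)=5(x-\frac12)+1$ for $\frac38\le x<\frac12$, $F_0(x)=1$ for $\frac12\le x<\frac58$, $F_0(x)=-5(x-\frac34)+\frac38$ for $\frac58\le x<\frac34$, $F_0(x)=\frac38$ for $\frac34\le x\le1$; $F_1(x)=1$ for $0\le x<\frac14$, $F_1(x)=-4(x-\frac14)+1$ for $\frac14\le x<\frac38$, $F_1(x)=\frac12$ for $\frac38\le x<\frac12$, $F_1(x)=4(x-\frac58)+1$ for $\frac12\le x<\frac58$, $F_1(x)=1$ for $\frac58\le x\le1$; and $F_2(x)=1$ for all $x\in[0,1]$. Consider the control system $x_{n+1}=F_{u_n}(x_n)$ and let $Q=[\frac14,\frac12]$. Then $Q$ is equi-invariant in the mean but not equi-invariant.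
   Context: For $\omega=(\omega_0,\omega_1,\dots)\in\mathscr U=U^{\mathbb N_0}$ and $x\in X$: $\phi(0,x,\omega)=x$, $\phi(k,x,\omega)=F_{\omega_{k-1}}\circ\cdots\circ F_{\omega_0}(x)$. $d(y,Q)=\inf_{q\in Q}|y-q|$, $B_\varepsilon(Q)=\{y:d(y,Q)<\varepsilon\}$, $B(x,\delta)$ open ball, $\mathbb N=\{1,2,\dots\}$. A point $x\in Q$ is an equi-invariant point of $Q$ if for every $\varepsilon>0$ there exist $\delta>0$ and $\omega\in\mathscr U$ such that $\phi(k,y,\omega)\in B_\varepsilon(Q)$ for all $k\in\mathbb N_0$ and all $y\in B(x,\delta)\cap Q$. It is an equi-invariant point in the mean of $Q$ if for every $\varepsilon>0$ there exist $\delta>0$ and $\omega\in\mathscr U$ such that $\frac1n\sum_{i=0}^{n-1}d(\phi(i,y,\omega),Q)<\varepsilon$ for all $n\in\mathbb N$ and all $y\in B(x,\delta)\cap Q$. $Q$ is equi-invariant (resp. equi-invariant in the mean) if all its points are. *)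

theory Defs
  imports "HOL-Analysis.Analysis"
begin

fun phi :: "('u \<Rightarrow> 'a \<Rightarrow> 'a) \<Rightarrow> nat \<Rightarrow> 'a \<Rightarrow> (nat \<Rightarrow> 'u) \<Rightarrow> 'a" where
  "phi F 0 x w = x"
| "phi F (Suc k) x w = F (w k) (phi F k x w)"

definition equi_invariant_point ::
  "('u \<Rightarrow> 'a::metric_space \<Rightarrow> 'a) \<Rightarrow> 'u set \<Rightarrow> 'a set \<Rightarrow> 'a \<Rightarrow> bool" where
  "equi_invariant_point F U Q x \<longleftrightarrow> x \<in> Q \<and>
     (\<forall>\<epsilon>>0. \<exists>\<delta>>0. \<exists>w. (\<forall>i. w i \<in> U) \<and>
        (\<forall>k. \<forall>y \<in> ball x \<delta> \<inter> Q. infdist (phi F k y w) Q < \<epsilon>))"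

definition equi_invariant_mean_point ::
  "('u \<Rightarrow> 'a::metric_space \<Rightarrow> 'a) \<Rightarrow> 'u set \<Rightarrow> 'a set \<Rightarrow> 'a \<Rightarrow> bool" where
  "equi_invariant_mean_point F U Q x \<longleftrightarrow> x \<in> Q \<and>
     (\<forall>\<epsilon>>0. \<exists>\<delta>>0. \<exists>w. (\<forall>i. w i \<in> U) \<and>
        (\<forall>n::nat. n \<ge> 1 \<longrightarrow> (\<forall>y \<in> ball x \<delta> \<inter> Q.
            (\<Sum>i<n. infdist (phi F i y w) Q) / real n < \<epsilon>)))"

definition equi_invariant :: "('u \<Rightarrow> 'a::metric_space \<Rightarrow> 'a) \<Rightarrow> 'u set \<Rightarrow> 'a set \<Rightarrow> bool" where
  "equi_invariant F U Q \<longleftrightarrow> (\<forall>x\<in>Q. equi_invariant_point F U Q x)"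

definition equi_invariant_mean :: "('u \<Rightarrow> 'a::metric_space \<Rightarrow> 'a) \<Rightarrow> 'u set \<Rightarrow> 'a set \<Rightarrow> bool" where
  "equi_invariant_mean F U Q \<longleftrightarrow> (\<forall>x\<in>Q. equi_invariant_mean_point F U Q x)"

text \<open>The concrete maps (only their values on [0,1] matter; trajectories from [0,1] stay in [0,1]).\<close>
definition F0 :: "real \<Rightarrow> real" where
  "F0 x = (if x < 3/8 then x
           else if x < 1/2 then 5 * (x - 1/2) + 1
           else if x < 5/8 then 1
           else if x < 3/4 then -5 * (x - 3/4) + 3/8
           else 3/8)"

definition F1 :: "real \<Rightarrow> real" where
  "F1 x = (if x < 1/4 then 1
           else if x < 3/8 then -4 * (x - 1/4) + 1
           else if x < 1/2 then 1/2
           else if x < 5/8 then 4 * (x - 5/8) + 1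
           else 1)"

definition F2 :: "real \<Rightarrow> real" where
  "F2 x = 1"

definition Fsys :: "nat \<Rightarrow> real \<Rightarrow> real" where
  "Fsys u = (if u = 0 then F0 else if u = 1 then F1 else F2)"

end

theory Submission
  imports Defs
begin

lemma phi_add: "phi F (k + j) x w = phi F j (phi F k x w) (\<lambda>i. w (k + i))"
  by (induction j) auto

lemma phi_Suc_left: "phi F (Suc j) x w = phi F j (F (w 0) x) (\<lambda>i. w (Suc i))"
  by (induction j) auto

lemma Fsys_simps: "Fsys 0 = F0" "Fsys (Suc 0) = F1" "Fsys 1 = F1"
  by (auto simp: Fsys_def)

lemma infdist_big:
  assumes "(5/8::real) \<le> p"
  shows "1/8 \<le> infdist p {1/4..1/2::real}"
proof -
  have "infdist p {1/4..1/2::real} = (INF a\<in>{1/4..1/2::real}. dist p a)"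
    by (rule infdist_notempty) auto
  also have "1/8 \<le> \<dots>"
    by (rule cINF_greatest) (use assms in \<open>auto simp: dist_real_def\<close>)
  finally show ?thesis by simp
qed

lemma F1_expand:
  "\<forall>z w. z = 1/2 + 1/(8*4^m) \<longrightarrow> (\<exists>j. phi Fsys j z w \<ge> (5/8::real))"
proof (induction m)
  case 0
  show ?case by (auto intro!: exI[of _ 0])
next
  case (Suc m)
  show ?case
  proof (intro allI impI)
    fix z :: real and w :: "nat \<Rightarrow> nat"
    assume z: "z = 1/2 + 1/(8*4^Suc m)"
    have pos: "(0::real) < 1/(8*4^Suc m)" by simp
    have h: "(1::real) \<le> 4^m" by simp
    have le: "1/(8*4^Suc m) \<le> (1/32::real)"
    proof -
      have "(32::real) \<le> 8*4^Suc m" using h by simp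
      thus ?thesis by (simp add: divide_simps)
    qed
    have zlo: "1/2 < z" "z < 5/8" using z pos le by linarith+
    show "\<exists>j. phi Fsys j z w \<ge> 5/8"
    proof (cases "w 0 = 1")
      case True
      have "Fsys (w 0) z = 4*(z-5/8)+1"
        using True zlo by (simp add: Fsys_def F1_def)
      also have "\<dots> = 1/2 + 1/(8*4^m)"
        using z by (simp add: field_simps)
      finally have "Fsys (w 0) z = 1/2 + 1/(8*4^m)" .
      then obtain j where j: "phi Fsys j (Fsys (w 0) z) (\<lambda>i. w (Suc i)) \<ge> 5/8"
        using Suc.IH by blast
      have "phi Fsys (Suc j) z w \<ge> 5/8" using j by (simp only: phi_Suc_left)
      thus ?thesis by (rule exI)
    next
      case False
      have "Fsys (w 0) z = 1"
        using False zlo by (auto simp: Fsys_def F0_def F2_def)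
      hence "phi Fsys 1 z w = 1" by simp
      thus ?thesis by (intro exI[of _ 1]) simp
    qed
  qed
qed

lemma F0_expand:
  "\<forall>z w. (\<forall>i. w i = 0) \<longrightarrow> z = 3/8 + 1/(8*5^m) \<longrightarrow> (\<exists>j. phi Fsys j z w \<ge> (5/8::real))"
proof (induction m)
  case 0
  show ?case
  proof (intro allI impI)
    fix z :: real and w :: "nat \<Rightarrow> nat"
    assume w: "\<forall>i. w i = 0" and z: "z = 3/8 + 1/(8*5^0)"
    have z2: "z = 1/2" using z by simp
    have "F0 z = 1" using z2 by (simp add: F0_def)
    moreover have "phi Fsys (Suc 0) z w = Fsys (w 0) z" by simp
    ultimately have "phi Fsys (Suc 0) z w = 1" using w by (simp add: Fsys_simps)
    thus "\<exists>j. phi Fsys j z w \<ge> 5/8" by (intro exI[of _ "Suc 0"]) simp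
  qed
next
  case (Suc m)
  show ?case
  proof (intro allI impI)
    fix z :: real and w :: "nat \<Rightarrow> nat"
    assume w: "\<forall>i. w i = 0" and z: "z = 3/8 + 1/(8*5^Suc m)"
    have pos: "(0::real) < 1/(8*5^Suc m)" by simp
    have h: "(1::real) \<le> 5^m" by simp
    have le: "1/(8*5^Suc m) \<le> (1/40::real)"
    proof -
      have "(40::real) \<le> 8*5^Suc m" using h by simp
      thus ?thesis by (simp add: divide_simps)
    qed
    have zlo: "3/8 < z" "z < 1/2" using z pos le by linarith+
    have w0: "w 0 = 0" using w by simp
    have "F0 z = 5*(z-1/2)+1"
      using zlo by (simp add: F0_def)
    also have "\<dots> = 3/8 + 1/(8*5^m)"
      using z by (simp add: field_simps)
    finally have fz: "Fsys (w 0) z = 3/8 + 1/(8*5^m)" using w0 by (simp add: Fsys_simps)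
    have ws: "\<forall>i. w (Suc i) = 0" using w by simp
    have ex: "\<exists>j. phi Fsys j (Fsys (w 0) z) (\<lambda>i. w (Suc i)) \<ge> 5/8"
      using Suc.IH[rule_format, of "\<lambda>i. w (Suc i)" "Fsys (w 0) z"] ws fz by simp
    then obtain j where j: "phi Fsys j (Fsys (w 0) z) (\<lambda>i. w (Suc i)) \<ge> 5/8" ..
    have "phi Fsys (Suc j) z w \<ge> 5/8" using j by (simp only: phi_Suc_left)
    thus "\<exists>j. phi Fsys j z w \<ge> 5/8" by (rule exI)
  qed
qed

lemma left_fixed:
  "(\<forall>i<k. w i = 0) \<Longrightarrow> 1/4 \<le> y \<Longrightarrow> y < 3/8 \<Longrightarrow> phi Fsys k (y::real) w = y"
  by (induction k) (auto simp: Fsys_def F0_def)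

lemma not_ei: "\<not> equi_invariant Fsys {0,1,2} {1/4..1/2::real}"
proof
  assume "equi_invariant Fsys {0,1,2} {1/4..1/2::real}"
  hence "equi_invariant_point Fsys {0,1,2} {1/4..1/2::real} (3/8)"
    unfolding equi_invariant_def by auto
  then obtain \<delta> w where d: "\<delta> > 0" and
    H: "\<forall>k. \<forall>y \<in> ball (3/8) \<delta> \<inter> {1/4..1/2::real}. infdist (phi Fsys k y w) {1/4..1/2} < 1/8"
    unfolding equi_invariant_point_def by (metis divide_pos_pos zero_less_numeral zero_less_one)
  have bad: False if "y \<in> ball (3/8) \<delta> \<inter> {1/4..1/2::real}" "phi Fsys k y w \<ge> 5/8" for y k
  proof -
    have "infdist (phi Fsys k y w) {1/4..1/2} < 1/8" using H that(1) by blast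
    with infdist_big[OF that(2)] show False by linarith
  qed
  show False
  proof (cases "\<forall>i. w i = 0")
    case True
    obtain m where m: "1/(8*\<delta>) < 5^m" using real_arch_pow[of 5 "1/(8*\<delta>)"] by auto
    have p: "(0::real) < 1/(8*5^m)" by simp
    have l: "1/(8*5^m) < \<delta>" using m d by (simp add: field_simps)
    have l2: "1/(8*5^m) \<le> (1/8::real)" by (simp add: field_simps)
    define t where "t = 1/(8*5^m::real)"
    define y where "y = 3/8 + t"
    have yin: "y \<in> ball (3/8) \<delta> \<inter> {1/4..1/2::real}"
      using p l l2 unfolding t_def[symmetric] by (auto simp: y_def dist_real_def)
    obtain j where j: "phi Fsys j y w \<ge> 5/8" using F0_expand True y_def t_def by blast
    show False by (rule bad[OF yin j])
  next
    case False
    define k where "k = (LEAST i. w i \<noteq> 0)"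
    have ex: "\<exists>i. w i \<noteq> 0" using False by blast
    have wk: "w k \<noteq> 0" unfolding k_def by (rule LeastI_ex[OF ex])
    have wlt: "\<forall>i<k. w i = 0" unfolding k_def using not_less_Least by blast
    obtain m where m: "1/(32*\<delta>) < 4^m" using real_arch_pow[of 4 "1/(32*\<delta>)"] by auto
    have p: "(0::real) < 1/(8*4^Suc m)" by simp
    have l: "1/(8*4^Suc m) < \<delta>" using m d by (simp add: field_simps)
    have h: "(1::real) \<le> 4^m" by simp
    have l2: "1/(8*4^Suc m) \<le> (1/32::real)"
    proof -
      have "(32::real) \<le> 8*4^Suc m" using h by simp
      thus ?thesis by (simp add: divide_simps)
    qed
    define t where "t = 1/(8*4^Suc m::real)"
    define y where "y = 3/8 - t"
    have yin: "y \<in> ball (3/8) \<delta> \<inter> {1/4..1/2::real}"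
      using p l l2 unfolding t_def[symmetric] by (auto simp: y_def dist_real_def)
    have y1: "1/4 \<le> y" "y < 3/8" using p l2 unfolding t_def[symmetric] by (auto simp: y_def)
    have pk: "phi Fsys k y w = y" using left_fixed[OF wlt y1] .
    have pSk: "phi Fsys (Suc k) y w = Fsys (w k) y" using pk by simp
    show False
    proof (cases "w k = 1")
      case True
      have "Fsys (w k) y = -4*(y-1/4)+1"
        using True y1 by (simp add: Fsys_def F1_def)
      also have "\<dots> = 1/2 + 1/(8*4^m)"
        by (simp add: y_def t_def field_simps)
      finally have "Fsys (w k) y = 1/2 + 1/(8*4^m)" .
      then obtain j where j: "phi Fsys j (Fsys (w k) y) (\<lambda>i. w (Suc k + i)) \<ge> 5/8"
        using F1_expand by blast
      have jj: "phi Fsys (Suc k + j) y w \<ge> 5/8" using j pSk by (simp only: phi_add)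
      show False by (rule bad[OF yin jj])
    next
      case False
      have "Fsys (w k) y = 1" using False wk by (simp add: Fsys_def F2_def)
      with pSk have jj: "phi Fsys (Suc k) y w \<ge> 5/8" by simp
      show False by (rule bad[OF yin jj])
    qed
  qed
qed


lemma F1_right: "3/8 \<le> v \<Longrightarrow> v \<le> 1/2 \<Longrightarrow> F1 v = 1/2"
  by (auto simp: F1_def)

lemma right_orbit:
  "(\<forall>i. w i = 1) \<Longrightarrow> 3/8 \<le> y \<Longrightarrow> y \<le> 1/2 \<Longrightarrow> phi Fsys k (y::real) w \<in> {3/8..1/2}"
  by (induction k) (auto simp: Fsys_def F1_right)

lemma mean_left:
  assumes "1/4 \<le> x" "x < 3/8"
  shows "equi_invariant_mean_point Fsys {0,1,2} {1/4..1/2::real} x"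
  unfolding equi_invariant_mean_point_def
proof (intro conjI allI impI)
  show "x \<in> {1/4..1/2}" using assms by auto
  fix \<epsilon> :: real assume e: "\<epsilon> > 0"
  show "\<exists>\<delta>>0. \<exists>w. (\<forall>i. w i \<in> {0,1,2}) \<and> (\<forall>n::nat. n \<ge> 1 \<longrightarrow> (\<forall>y \<in> ball x \<delta> \<inter> {1/4..1/2}.
            (\<Sum>i<n. infdist (phi Fsys i y w) {1/4..1/2}) / real n < \<epsilon>))"
  proof (intro exI[of _ "3/8 - x"] conjI exI[of _ "\<lambda>_. 0::nat"] allI impI ballI)
    show "0 < 3/8 - x" using assms by simp
    show "(0::nat) \<in> {0,1,2}" by simp
    fix n :: nat and y assume y: "y \<in> ball x (3/8 - x) \<inter> {1/4..1/2::real}"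
    hence y1: "1/4 \<le> y" "y < 3/8" by (auto simp: dist_real_def)
    have "\<And>i. phi Fsys i y (\<lambda>_. 0) = y" by (rule left_fixed) (use y1 in auto)
    hence "\<And>i. infdist (phi Fsys i y (\<lambda>_. 0)) {1/4..1/2} = 0" using y by simp
    thus "(\<Sum>i<n. infdist (phi Fsys i y (\<lambda>_. 0)) {1/4..1/2}) / real n < \<epsilon>" using e by simp
  qed
qed

lemma mean_right:
  assumes "3/8 < x" "x \<le> 1/2"
  shows "equi_invariant_mean_point Fsys {0,1,2} {1/4..1/2::real} x"
  unfolding equi_invariant_mean_point_def
proof (intro conjI allI impI)
  show "x \<in> {1/4..1/2}" using assms by auto
  fix \<epsilon> :: real assume e: "\<epsilon> > 0"
  show "\<exists>\<delta>>0. \<exists>w. (\<forall>i. w i \<in> {0,1,2}) \<and> (\<forall>n::nat. n \<ge> 1 \<longrightarrow> (\<forall>y \<in> ball x \<delta> \<inter> {1/4..1/2}.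
            (\<Sum>i<n. infdist (phi Fsys i y w) {1/4..1/2}) / real n < \<epsilon>))"
  proof (intro exI[of _ "x - 3/8"] conjI exI[of _ "\<lambda>_. 1::nat"] allI impI ballI)
    show "0 < x - 3/8" using assms by simp
    show "(1::nat) \<in> {0,1,2}" by simp
    fix n :: nat and y assume y: "y \<in> ball x (x - 3/8) \<inter> {1/4..1/2::real}"
    hence y1: "3/8 \<le> y" "y \<le> 1/2" by (auto simp: dist_real_def)
    have r: "phi Fsys i y (\<lambda>_. 1) \<in> {3/8..1/2}" for i by (rule right_orbit) (use y1 in auto)
    have "phi Fsys i y (\<lambda>_. 1) \<in> {1/4..1/2}" for i using r[of i] by auto
    hence "\<And>i. infdist (phi Fsys i y (\<lambda>_. 1)) {1/4..1/2} = 0" by simp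
    thus "(\<Sum>i<n. infdist (phi Fsys i y (\<lambda>_. 1)) {1/4..1/2}) / real n < \<epsilon>" using e by simp
  qed
qed

lemma mean_mid:
  "equi_invariant_mean_point Fsys {0,1,2} {1/4..1/2::real} (3/8)"
  unfolding equi_invariant_mean_point_def
proof (intro conjI allI impI)
  show "3/8 \<in> {1/4..1/2::real}" by auto
  fix \<epsilon> :: real assume e: "\<epsilon> > 0"
  define N where "N = nat \<lceil>1/\<epsilon>\<rceil>"
  have N: "1/\<epsilon> \<le> real N" unfolding N_def by linarith
  define \<delta> where "\<delta> = 1/(32*5^N::real)"
  define w where "w = (\<lambda>i::nat. if i < N then 0 else if i = N then 1 else if i \<le> N+2 then 0 else 1::nat)"
  have dpos: "\<delta> > 0" unfolding \<delta>_def by simp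
  have d5: "5^N * \<delta> = 1/32" unfolding \<delta>_def by simp
  have d32: "\<delta> \<le> 1/32"
  proof -
    have "(1::real) \<le> 5^N" by simp
    hence "(32::real) \<le> 32*5^N" by simp
    thus ?thesis unfolding \<delta>_def by (simp add: divide_simps)
  qed
  show "\<exists>\<delta>>0. \<exists>w. (\<forall>i. w i \<in> {0,1,2}) \<and> (\<forall>n::nat. n \<ge> 1 \<longrightarrow> (\<forall>y \<in> ball (3/8) \<delta> \<inter> {1/4..1/2}.
            (\<Sum>i<n. infdist (phi Fsys i y w) {1/4..1/2}) / real n < \<epsilon>))"
  proof (intro exI[of _ \<delta>] conjI exI[of _ w] allI impI ballI)
    show "0 < \<delta>" by (rule dpos)
    show "w i \<in> {0,1,2}" for i by (simp add: w_def)
    fix n :: nat and y assume n1: "n \<ge> 1" and y: "y \<in> ball (3/8) \<delta> \<inter> {1/4..1/2::real}"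
    hence yQ: "1/4 \<le> y" "y \<le> 1/2" and yd: "\<bar>y - 3/8\<bar> < \<delta>" by (auto simp: dist_real_def)
    define Q where "Q = {1/4..1/2::real}"
    have orb1: "i \<le> N \<Longrightarrow> phi Fsys i y w = (if y < 3/8 then y else 3/8 + 5^i*(y-3/8))" for i
    proof (induction i)
      case 0 then show ?case by simp
    next
      case (Suc i)
      have wi: "w i = 0" using Suc.prems by (simp add: w_def)
      have IH: "phi Fsys i y w = (if y < 3/8 then y else 3/8 + 5^i*(y-3/8))"
        using Suc by simp
      show ?case
      proof (cases "y < 3/8")
        case True
        have "phi Fsys (Suc i) y w = F0 y" using IH wi True by (simp add: Fsys_simps)
        thus ?thesis using True yQ by (simp add: F0_def)
      next
        case False
        have "(5::real)^i \<le> 5^N" using Suc.prems by (intro power_increasing) auto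
        hence "5^i*(y-3/8) \<le> 5^N * \<delta>" using False yd
          by (intro mult_mono) auto
        hence b: "5^i*(y-3/8) \<le> 1/32" using d5 by simp
        have b0: "0 \<le> 5^i*(y-3/8)" using False by simp
        have "phi Fsys (Suc i) y w = F0 (3/8 + 5^i*(y-3/8))" using IH wi False by (simp add: Fsys_simps)
        also have "\<dots> = 5 * ((3/8 + 5^i*(y-3/8)) - 1/2) + 1" using b b0 by (simp add: F0_def)
        also have "\<dots> = 3/8 + 5^Suc i*(y-3/8)" by (simp add: algebra_simps)
        finally show ?thesis using False by simp
      qed
    qed
    have inQ1: "i \<le> N \<Longrightarrow> phi Fsys i y w \<in> Q" for i
    proof -
      assume iN: "i \<le> N"
      show ?thesis
      proof (cases "y < 3/8")
        case True thus ?thesis using orb1[OF iN] yQ by (simp add: Q_def)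
      next
        case False
        have "(5::real)^i \<le> 5^N" using iN by (intro power_increasing) auto
        hence "5^i*(y-3/8) \<le> 5^N * \<delta>" using False yd
          by (intro mult_mono) auto
        hence b: "5^i*(y-3/8) \<le> 1/32" using d5 by simp
        have b0: "0 \<le> 5^i*(y-3/8)" using False by simp
        have v: "phi Fsys i y w = 3/8 + 5^i*(y-3/8)" using orb1[OF iN] False by simp
        have "1/4 \<le> phi Fsys i y w" using v b b0 by linarith
        moreover have "phi Fsys i y w \<le> 1/2" using v b b0 by linarith
        ultimately show ?thesis by (simp add: Q_def)
      qed
    qed
    have pN1: "1/2 \<le> phi Fsys (Suc N) y w \<and> phi Fsys (Suc N) y w < 5/8"
    proof (cases "y < 3/8")
      case True
      have "phi Fsys (Suc N) y w = F1 y" using orb1[of N] True by (simp add: w_def Fsys_simps)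
      also have "\<dots> = -4*(y-1/4)+1" using True yQ by (simp add: F1_def)
      finally show ?thesis using True yd d32 by auto
    next
      case False
      have "(5::real)^N*(y-3/8) \<le> 5^N * \<delta>" using False yd by (intro mult_left_mono) auto
      hence b: "5^N*(y-3/8) \<le> 1/32" using d5 by simp
      have b0: "0 \<le> 5^N*(y-3/8)" using False by simp
      have "phi Fsys (Suc N) y w = F1 (3/8 + 5^N*(y-3/8))" using orb1[of N] False by (simp add: w_def Fsys_simps)
      also have "\<dots> = 1/2" using b b0 by (intro F1_right) auto
      finally show ?thesis by simp
    qed
    have pN2: "phi Fsys (Suc (Suc N)) y w = 1"
      using pN1 by (simp add: w_def Fsys_simps F0_def)
    have pN3: "phi Fsys (N+3+j) y w \<in> {3/8..1/2}" for j
    proof (induction j)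
      case 0
      have "phi Fsys (N+3) y w = F0 1" using pN2 by (simp add: w_def Fsys_simps numeral_3_eq_3)
      thus ?case by (simp add: F0_def)
    next
      case (Suc j)
      have e: "N+3+Suc j = Suc (N+3+j)" by simp
      have w1: "w (N+3+j) = 1" by (simp add: w_def)
      have "phi Fsys (N+3+Suc j) y w = Fsys (w (N+3+j)) (phi Fsys (N+3+j) y w)"
        by (simp only: e phi.simps)
      hence "phi Fsys (N+3+Suc j) y w = F1 (phi Fsys (N+3+j) y w)" by (simp only: w1 Fsys_simps)
      thus ?case using Suc F1_right[of "phi Fsys (N+3+j) y w"] by simp
    qed
    define f where "f i = infdist (phi Fsys i y w) Q" for i
    have f0: "f i = 0" if "i \<notin> {N+1, N+2}" for i
    proof (cases "i \<le> N")
      case True thus ?thesis using inQ1 by (simp add: f_def)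
    next
      case False
      have "N+3 \<le> i" using False that by auto
      hence "i = N+3+(i-(N+3))" by simp
      then obtain j where "i = N+3+j" by blast
      thus ?thesis using pN3[of j] by (simp add: f_def Q_def)
    qed
    have fle: "f i \<le> 1/2" if "i \<in> {N+1, N+2}" for i
    proof -
      have "phi Fsys i y w \<in> {1/2..1}" using that pN1 pN2 by auto
      hence "dist (phi Fsys i y w) (1/2) \<le> 1/2" by (auto simp: dist_real_def)
      thus ?thesis unfolding f_def Q_def by (intro infdist_le2[of "1/2"]) auto
    qed
    have sumeq: "(\<Sum>i<n. f i) = (\<Sum>i\<in>{..<n} \<inter> {N+1,N+2}. f i)"
      by (rule sum.mono_neutral_right) (auto intro: f0)
    show "(\<Sum>i<n. infdist (phi Fsys i y w) {1/4..1/2}) / real n < \<epsilon>"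
    proof (cases "n \<le> N+1")
      case True
      hence "{..<n} \<inter> {N+1,N+2} = {}" by auto
      hence "(\<Sum>i<n. f i) = 0" using sumeq by simp
      thus ?thesis using e unfolding f_def Q_def by simp
    next
      case False
      have s0: "(\<Sum>i\<in>{..<n} \<inter> {N+1,N+2}. f i) \<le> of_nat (card ({..<n} \<inter> {N+1,N+2})) * (1/2)"
        by (rule sum_bounded_above) (use fle in blast)
      have c1: "card ({..<n} \<inter> {N+1,N+2}) \<le> card {N+1,N+2::nat}" by (rule card_mono) auto
      have c2: "card {N+1,N+2::nat} = 2" by simp
      have c: "real (card ({..<n} \<inter> {N+1,N+2})) \<le> 2" using c1 c2 by linarith
      have s1: "(\<Sum>i<n. f i) \<le> 1" using sumeq s0 c by linarith
      have nN: "real N < real n" using False by simp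
      have "1/\<epsilon> < real n" by (rule order_le_less_trans[OF N nN])
      hence "1 < \<epsilon> * real n" using e by (simp add: field_simps)
      hence "(\<Sum>i<n. f i) < \<epsilon> * real n" using s1 by linarith
      thus ?thesis using n1 unfolding f_def Q_def by (simp add: field_simps)
    qed
  qed
qed

theorem mainTheorem14:
  shows "equi_invariant_mean Fsys {0,1,2} {1/4..1/2}
       \<and> \<not> equi_invariant Fsys {0,1,2} {1/4..1/2}"
proof
  show "equi_invariant_mean Fsys {0,1,2} {1/4..1/2}"
    unfolding equi_invariant_mean_def
  proof
    fix x :: real assume x: "x \<in> {1/4..1/2}"
    consider "x < 3/8" | "x = 3/8" | "x > 3/8" by linarith
    thus "equi_invariant_mean_point Fsys {0,1,2} {1/4..1/2} x"
    proof cases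
      case 1
      have "1/4 \<le> x" using x by simp
      thus ?thesis using 1 by (rule mean_left)
    next
      case 2 show ?thesis by (subst 2) (rule mean_mid)
    next
      case 3
      have "x \<le> 1/2" using x by simp
      with 3 show ?thesis by (rule mean_right)
    qed
  qed
  show "\<not> equi_invariant Fsys {0,1,2} {1/4..1/2}" by (rule not_ei)
qed

end
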